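(* Let $X$ be a strongly connected finite digraph with $\delta(X)=0$. Then there exists a nonzero integer $m(X)$ such that $$g_X^*(1)=m(X)\cdot\#\mathrm{BF}(X)_{\rm tors}.$$
   Context: A digraph $X=(V_X,E_X)$ has incidence map $e\mapsto(o(e),t(e))$; it is strongly connected if for any two distinct vertices there is a directed path from the first to the second. For finite $X$: $\mathcal{A}_X:\mathbb{Z}V_X\to\mathbb{Z}V_X$, $v\mapsto\sum_{e:o(e)=v}t(e)$; Bowen--Franks operator $\mathcal{BF}_X=\mathcal{I}-\mathcal{A}_X$; $\mathrm{BF}(X)=\mathrm{coker}(\mathcal{BF}_X)$. $g_X(u)=\det(\mathcal{I}-\mathcal{A}_Xu)\in\mathbb{Z}[u]$; $r_X=\mathrm{ord}_{u=1}g_X(u)$; $g_X^*(1)$ is the first non-vanishing coefficient of the Taylor expansion of $g_X$ at $u=1$ (i.e. the coefficient of $(u-1)^{r_X}$). $\delta(X)=r_X-\mathrm{rank}_{\mathbb{Z}}\mathrm{BF}(X)$. *)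

theory Defs
  imports "Graph_Theory.Digraph" "Graph_Theory.Digraph_Component"
    "HOL-Combinatorics.Permutations" "HOL-Computational_Algebra.Polynomial"
begin

text \<open>A finite digraph X is a fin_digraph G (multiple arcs and loops allowed),
  with o = tail G and t = head G.\<close>

text \<open>Number of arcs from v to w: coefficient of w in A_X(v).\<close>
definition adj :: "('v,'e) pre_digraph \<Rightarrow> 'v \<Rightarrow> 'v \<Rightarrow> int" where
  "adj G v w = int (card {e \<in> arcs G. tail G e = v \<and> head G e = w})"

text \<open>The free abelian group Z V_X, as finitely supported integer functions on verts.\<close>
definition ZV :: "('v,'e) pre_digraph \<Rightarrow> ('v \<Rightarrow> int) set" where
  "ZV G = {f. \<forall>v. v \<notin> verts G \<longrightarrow> f v = 0}"

text \<open>The Bowen--Franks operator I - A_X acting on Z V_X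
  (A_X sends the basis vector v to the sum of t(e) over arcs e with o(e) = v).\<close>
definition bf_op :: "('v,'e) pre_digraph \<Rightarrow> ('v \<Rightarrow> int) \<Rightarrow> ('v \<Rightarrow> int)" where
  "bf_op G f = (\<lambda>w. if w \<in> verts G then f w - (\<Sum>v\<in>verts G. f v * adj G v w) else 0)"

definition bf_image :: "('v,'e) pre_digraph \<Rightarrow> ('v \<Rightarrow> int) set" where
  "bf_image G = bf_op G ` ZV G"

text \<open>Congruence modulo the image: BF(X) = ZV G // bf_rel G.\<close>
definition bf_rel :: "('v,'e) pre_digraph \<Rightarrow> (('v \<Rightarrow> int) \<times> ('v \<Rightarrow> int)) set" where
  "bf_rel G = {(x,y). x \<in> ZV G \<and> y \<in> ZV G \<and> x - y \<in> bf_image G}"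

definition bf_tors_reps :: "('v,'e) pre_digraph \<Rightarrow> ('v \<Rightarrow> int) set" where
  "bf_tors_reps G = {x \<in> ZV G. \<exists>k::int. k \<noteq> 0 \<and> (\<lambda>w. k * x w) \<in> bf_image G}"

definition bf_tors_card :: "('v,'e) pre_digraph \<Rightarrow> nat" where
  "bf_tors_card G = card (bf_tors_reps G // bf_rel G)"

definition bf_rank :: "('v,'e) pre_digraph \<Rightarrow> nat" where
  "bf_rank G = Max {card S | S. finite S \<and> S \<subseteq> ZV G \<and>
      (\<forall>c :: ('v \<Rightarrow> int) \<Rightarrow> int.
         (\<lambda>w. \<Sum>s\<in>S. c s * s w) \<in> bf_image G \<longrightarrow> (\<forall>s\<in>S. c s = 0))}"

definition det_on :: "'v set \<Rightarrow> ('v \<Rightarrow> 'v \<Rightarrow> 'a::comm_ring_1) \<Rightarrow> 'a" where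
  "det_on V M = (\<Sum>p \<in> {p. p permutes V}. of_int (sign p) * (\<Prod>v\<in>V. M v (p v)))"

definition gX :: "('v,'e) pre_digraph \<Rightarrow> int poly" where
  "gX G = det_on (verts G) (\<lambda>v w. (if v = w then 1 else 0) - [:0, adj G v w:])"

definition rX :: "('v,'e) pre_digraph \<Rightarrow> nat" where
  "rX G = order 1 (gX G)"

text \<open>g_X^*(1): coefficient of (u-1)^{r_X} in the Taylor expansion of g_X at 1.\<close>
definition gX_star :: "('v,'e) pre_digraph \<Rightarrow> int" where
  "gX_star G = coeff (pcompose (gX G) [:1, 1:]) (rX G)"

definition delta :: "('v,'e) pre_digraph \<Rightarrow> int" where
  "delta G = int (rX G) - int (bf_rank G)"

end

theory Submission
  imports Defs
begin

lemma det_on_transpose: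
  assumes "finite V"
  shows "det_on V (\<lambda>v w. M w v) = det_on V M"
proof -
  have "det_on V M = (\<Sum>p \<in> {p. p permutes V}. of_int (sign (inv p)) * (\<Prod>v\<in>V. M v (inv p v)))"
    unfolding det_on_def by (rule sum_permutations_inverse)
  also have "\<dots> = (\<Sum>p \<in> {p. p permutes V}. of_int (sign p) * (\<Prod>v\<in>V. M (p v) v))"
  proof (rule sum.cong[OF refl])
    fix p assume "p \<in> {p. p permutes V}"
    then have p: "p permutes V" by simp
    have "sign (inv p) = sign p"
      using sign_inverse permutes_imp_permutation[OF assms p] by blast
    moreover have "(\<Prod>v\<in>V. M (p v) v) = (\<Prod>v\<in>V. M v (inv p v))"
      using prod.permutes_inv[OF p, of "\<lambda>a b. M a b"] by simp
    ultimately show "of_int (sign (inv p)) * (\<Prod>v\<in>V. M v (inv p v)) = of_int (sign p) * (\<Prod>v\<in>V. M (p v) v)"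
      by simp
  qed
  finally show ?thesis unfolding det_on_def by simp
qed

lemma det_on_colswap:
  assumes "finite V" "i \<in> V" "k \<in> V" "i \<noteq> k"
  shows "det_on V (\<lambda>v w. M v (transpose i k w)) = - det_on V M"
proof -
  have t: "transpose i k permutes V" using assms by (simp add: permutes_swap_id)
  have "det_on V M = (\<Sum>p \<in> {p. p permutes V}. of_int (sign (transpose i k \<circ> p)) * (\<Prod>v\<in>V. M v ((transpose i k \<circ> p) v)))"
    unfolding det_on_def by (rule setum_permutations_compose_left[OF t])
  also have "\<dots> = (\<Sum>p \<in> {p. p permutes V}. - (of_int (sign p) * (\<Prod>v\<in>V. M v (transpose i k (p v)))))"
  proof (rule sum.cong[OF refl])
    fix p assume "p \<in> {p. p permutes V}"
    then have p: "p permutes V" by simp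
    have "sign (transpose i k \<circ> p) = sign (transpose i k) * sign p"
      by (rule sign_compose) (use permutes_imp_permutation[OF assms(1) p] permutes_imp_permutation[OF assms(1) t] in auto)
    then have "sign (transpose i k \<circ> p) = - sign p" using assms(4) by (simp add: sign_swap_id)
    then show "of_int (sign (transpose i k \<circ> p)) * (\<Prod>v\<in>V. M v ((transpose i k \<circ> p) v)) = - (of_int (sign p) * (\<Prod>v\<in>V. M v (transpose i k (p v))))"
      by simp
  qed
  finally show ?thesis unfolding det_on_def by (simp add: sum_negf)
qed

lemma det_on_row_linear:
  fixes M :: "'v \<Rightarrow> 'v \<Rightarrow> 'a::comm_ring_1"
  assumes "finite V" "k \<in> V"
  shows "det_on V (\<lambda>v w. if v = k then a w + c * b w else M v w)
       = det_on V (\<lambda>v w. if v = k then a w else M v w) + c * det_on V (\<lambda>v w. if v = k then b w else M v w)"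
proof -
  have *: "(\<Prod>v\<in>V. (if v = k then f (p v) else M v (p v))) = f (p k) * (\<Prod>v\<in>V-{k}. M v (p v))" for f :: "'v \<Rightarrow> 'a" and p
  proof -
    have "(\<Prod>v\<in>V. (if v = k then f (p v) else M v (p v))) = (if k = k then f (p k) else M k (p k)) * (\<Prod>v\<in>V-{k}. (if v = k then f (p v) else M v (p v)))"
      by (rule prod.remove[OF assms(1) assms(2)])
    also have "(\<Prod>v\<in>V-{k}. (if v = k then f (p v) else M v (p v))) = (\<Prod>v\<in>V-{k}. M v (p v))"
      by (rule prod.cong) auto
    finally show ?thesis by simp
  qed
  have **: "(\<Prod>v\<in>V. (if v = k then a (p v) + c * b (p v) else M v (p v))) = (a (p k) + c * b (p k)) * (\<Prod>v\<in>V-{k}. M v (p v))" for p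
    using *[of "\<lambda>x. a x + c * b x" p] by simp
  show ?thesis unfolding det_on_def
    apply (simp only: ** *[of a] *[of b])
    apply (simp add: sum_distrib_left sum.distrib[symmetric] algebra_simps)
    done
qed

lemma det_on_eq_rows:
  fixes M :: "'v \<Rightarrow> 'v \<Rightarrow> 'a::{idom,ring_char_0}"
  assumes "finite V" "i \<in> V" "k \<in> V" "i \<noteq> k" "\<And>w. M i w = M k w"
  shows "det_on V M = 0"
proof -
  have e: "(\<lambda>v w. M (transpose i k w) v) = (\<lambda>v w. M w v)"
    using assms(5) by (auto simp: fun_eq_iff transpose_def)
  have "det_on V (\<lambda>v w. M w v) = - det_on V (\<lambda>v w. M w v)"
    using det_on_colswap[OF assms(1-4), of "\<lambda>v w. M w v"] unfolding e .
  then have "det_on V M = - det_on V M" using det_on_transpose[OF assms(1), of M] by simp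
  then have "det_on V M + det_on V M = 0" by (metis neg_eq_iff_add_eq_0)
  then have "2 * det_on V M = 0" by (simp only: mult_2)
  then show ?thesis by simp
qed

lemma det_on_rowadd:
  fixes M :: "'v \<Rightarrow> 'v \<Rightarrow> 'a::{idom,ring_char_0}"
  assumes "finite V" "i \<in> V" "k \<in> V" "i \<noteq> k"
  shows "det_on V (\<lambda>v w. if v = k then M k w + c * M i w else M v w) = det_on V M"
proof -
  have "det_on V (\<lambda>v w. if v = k then M i w else M v w) = 0"
    by (rule det_on_eq_rows[OF assms(1-4)]) auto
  moreover have "(\<lambda>v w. if v = k then M k w else M v w) = M" by (auto simp: fun_eq_iff)
  ultimately show ?thesis using det_on_row_linear[OF assms(1,3), of "M k" c "M i" M] by simp
qed

lemma det_on_coladd: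
  fixes M :: "'v \<Rightarrow> 'v \<Rightarrow> 'a::{idom,ring_char_0}"
  assumes "finite V" "i \<in> V" "k \<in> V" "i \<noteq> k"
  shows "det_on V (\<lambda>v w. if w = k then M v k + c * M v i else M v w) = det_on V M"
proof -
  let ?X = "\<lambda>v w. if w = k then M v k + c * M v i else M v w"
  have "det_on V ?X = det_on V (\<lambda>v w. ?X w v)"
    using det_on_transpose[OF assms(1), of ?X] by simp
  also have "\<dots> = det_on V (\<lambda>v w. M w v)"
    using det_on_rowadd[OF assms, of "\<lambda>a b. M b a" c] by simp
  also have "\<dots> = det_on V M" by (rule det_on_transpose[OF assms(1)])
  finally show ?thesis .
qed

definition Zs :: "'v set \<Rightarrow> ('v \<Rightarrow> int) set" where
  "Zs V = {f. \<forall>v. v \<notin> V \<longrightarrow> f v = 0}"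
definition relL :: "'v set \<Rightarrow> ('v \<Rightarrow> int) set \<Rightarrow> (('v \<Rightarrow> int) \<times> ('v \<Rightarrow> int)) set" where
  "relL V L = {(x,y). x \<in> Zs V \<and> y \<in> Zs V \<and> x - y \<in> L}"
definition torsL :: "'v set \<Rightarrow> ('v \<Rightarrow> int) set \<Rightarrow> ('v \<Rightarrow> int) set" where
  "torsL V L = {x \<in> Zs V. \<exists>k::int. k \<noteq> 0 \<and> (\<lambda>w. k * x w) \<in> L}"
definition rsetL :: "'v set \<Rightarrow> ('v \<Rightarrow> int) set \<Rightarrow> nat set" where
  "rsetL V L = {card S | S. finite S \<and> S \<subseteq> Zs V \<and>
      (\<forall>c :: ('v \<Rightarrow> int) \<Rightarrow> int. (\<lambda>w. \<Sum>s\<in>S. c s * s w) \<in> L \<longrightarrow> (\<forall>s\<in>S. c s = 0))}"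

definition linm :: "'v set \<Rightarrow> (('v \<Rightarrow> int) \<Rightarrow> ('v \<Rightarrow> int)) \<Rightarrow> bool" where
  "linm V \<psi> \<longleftrightarrow> (\<forall>x\<in>Zs V. \<psi> x \<in> Zs V) \<and>
     (\<forall>S c. finite S \<longrightarrow> S \<subseteq> Zs V \<longrightarrow> \<psi> (\<lambda>w. \<Sum>s\<in>S. c s * s w) = (\<lambda>w. \<Sum>s\<in>S. c s * \<psi> s w)) \<and>
     (\<forall>x\<in>Zs V. \<forall>y\<in>Zs V. \<psi> (x - y) = \<psi> x - \<psi> y) \<and>
     (\<forall>k. \<forall>x\<in>Zs V. \<psi> (\<lambda>w. k * x w) = (\<lambda>w. k * \<psi> x w))"

definition lin_aut :: "'v set \<Rightarrow> (('v \<Rightarrow> int) \<Rightarrow> ('v \<Rightarrow> int)) \<Rightarrow> (('v \<Rightarrow> int) \<Rightarrow> ('v \<Rightarrow> int)) \<Rightarrow> bool" where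
  "lin_aut V \<psi> \<phi> \<longleftrightarrow> linm V \<psi> \<and> linm V \<phi> \<and> (\<forall>x\<in>Zs V. \<phi> (\<psi> x) = x) \<and> (\<forall>x\<in>Zs V. \<psi> (\<phi> x) = x)"

lemma lin_aut_sym: "lin_aut V \<psi> \<phi> \<Longrightarrow> lin_aut V \<phi> \<psi>"
  unfolding lin_aut_def by blast


lemma la_Z1: "lin_aut V \<psi> \<phi> \<Longrightarrow> x \<in> Zs V \<Longrightarrow> \<psi> x \<in> Zs V"
  unfolding lin_aut_def linm_def by (elim conjE) (simp)
lemma la_lin: "lin_aut V \<psi> \<phi> \<Longrightarrow> finite S \<Longrightarrow> S \<subseteq> Zs V \<Longrightarrow> \<psi> (\<lambda>w. \<Sum>s\<in>S. c s * s w) = (\<lambda>w. \<Sum>s\<in>S. c s * \<psi> s w)"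
  unfolding lin_aut_def linm_def by (elim conjE) (simp only: imp_conjL[symmetric])
lemma la_diff: "lin_aut V \<psi> \<phi> \<Longrightarrow> x \<in> Zs V \<Longrightarrow> y \<in> Zs V \<Longrightarrow> \<psi> (x - y) = \<psi> x - \<psi> y"
  unfolding lin_aut_def linm_def by (elim conjE) (simp)
lemma la_scale: "lin_aut V \<psi> \<phi> \<Longrightarrow> x \<in> Zs V \<Longrightarrow> \<psi> (\<lambda>w. k * x w) = (\<lambda>w. k * \<psi> x w)"
  unfolding lin_aut_def linm_def by (elim conjE) (simp)
lemma la_inv1: "lin_aut V \<psi> \<phi> \<Longrightarrow> x \<in> Zs V \<Longrightarrow> \<phi> (\<psi> x) = x"
  unfolding lin_aut_def by (elim conjE) simp
lemma la_inv2: "lin_aut V \<psi> \<phi> \<Longrightarrow> x \<in> Zs V \<Longrightarrow> \<psi> (\<phi> x) = x"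
  unfolding lin_aut_def by (elim conjE) simp
lemma la_inj: "lin_aut V \<psi> \<phi> \<Longrightarrow> inj_on \<psi> (Zs V)"
  by (rule inj_on_inverseI[where g=\<phi>]) (rule la_inv1)

lemma Zs_sum: "S \<subseteq> Zs V \<Longrightarrow> (\<lambda>w. \<Sum>s\<in>S. c s * s w) \<in> Zs V"
  unfolding Zs_def by (auto intro!: sum.neutral)

lemma Zs_diff: "x \<in> Zs V \<Longrightarrow> y \<in> Zs V \<Longrightarrow> x - y \<in> Zs V"
  unfolding Zs_def by auto

lemma Zs_scale: "x \<in> Zs V \<Longrightarrow> (\<lambda>w. k * x w) \<in> Zs V"
  unfolding Zs_def by auto

lemma tors_image:
  assumes L: "L \<subseteq> Zs V" and a: "lin_aut V \<psi> \<phi>"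
  shows "torsL V (\<psi> ` L) = \<psi> ` torsL V L"
proof
  note Z1 = la_Z1[OF a] and Z2 = la_Z1[OF lin_aut_sym[OF a]] and sc1 = la_scale[OF a]
    and sc2 = la_scale[OF lin_aut_sym[OF a]] and i1 = la_inv1[OF a] and i2 = la_inv2[OF a]
    and d1 = la_diff[OF a] and lin = la_lin[OF a]
  show "\<psi> ` torsL V L \<subseteq> torsL V (\<psi> ` L)"
  proof
    fix y assume "y \<in> \<psi> ` torsL V L"
    then obtain x k where x: "x \<in> Zs V" "k \<noteq> 0" "(\<lambda>w. k * x w) \<in> L" and y: "y = \<psi> x"
      unfolding torsL_def by blast
    have "(\<lambda>w. k * y w) = \<psi> (\<lambda>w. k * x w)" using sc1[OF x(1)] y by simp
    then show "y \<in> torsL V (\<psi> ` L)" unfolding torsL_def using x y Z1 by blast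
  qed
  show "torsL V (\<psi> ` L) \<subseteq> \<psi> ` torsL V L"
  proof
    fix y assume "y \<in> torsL V (\<psi> ` L)"
    then obtain k l where y: "y \<in> Zs V" "k \<noteq> 0" "(\<lambda>w. k * y w) = \<psi> l" "l \<in> L"
      unfolding torsL_def by blast
    have lz: "l \<in> Zs V" using y(4) L by blast
    have "(\<lambda>w. k * \<phi> y w) = \<phi> (\<lambda>w. k * y w)" using sc2[OF y(1)] by simp
    also have "\<dots> = l" using y(3) i1[OF lz] by simp
    finally have "\<phi> y \<in> torsL V L" unfolding torsL_def using Z2[OF y(1)] y(2) y(4) by blast
    moreover have "y = \<psi> (\<phi> y)" using i2[OF y(1)] by simp
    ultimately show "y \<in> \<psi> ` torsL V L" by blast
  qed
qed

lemma rel_class_image: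
  assumes L: "L \<subseteq> Zs V" and a: "lin_aut V \<psi> \<phi>" and x: "x \<in> Zs V"
  shows "relL V (\<psi> ` L) `` {\<psi> x} = \<psi> ` (relL V L `` {x})"
proof
  note Z1 = la_Z1[OF a] and Z2 = la_Z1[OF lin_aut_sym[OF a]] and sc1 = la_scale[OF a]
    and sc2 = la_scale[OF lin_aut_sym[OF a]] and i1 = la_inv1[OF a] and i2 = la_inv2[OF a]
    and d1 = la_diff[OF a] and lin = la_lin[OF a]
  show "\<psi> ` (relL V L `` {x}) \<subseteq> relL V (\<psi> ` L) `` {\<psi> x}"
  proof
    fix z assume "z \<in> \<psi> ` (relL V L `` {x})"
    then obtain y where y: "y \<in> Zs V" "x - y \<in> L" "z = \<psi> y" unfolding relL_def by blast
    have "\<psi> x - z = \<psi> (x - y)" using d1[OF x y(1)] y(3) by simp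
    then show "z \<in> relL V (\<psi> ` L) `` {\<psi> x}" unfolding relL_def using Z1 x y by auto
  qed
  show "relL V (\<psi> ` L) `` {\<psi> x} \<subseteq> \<psi> ` (relL V L `` {x})"
  proof
    fix z assume "z \<in> relL V (\<psi> ` L) `` {\<psi> x}"
    then obtain l where z: "z \<in> Zs V" "\<psi> x - z = \<psi> l" "l \<in> L" unfolding relL_def by blast
    define y where "y = \<phi> z"
    have yz: "y \<in> Zs V" "z = \<psi> y" using Z2[OF z(1)] i2[OF z(1)] unfolding y_def by auto
    have "\<psi> (x - y) = \<psi> l" using d1[OF x yz(1)] z(2) yz(2) by simp
    then have "\<phi> (\<psi> (x - y)) = \<phi> (\<psi> l)" by simp
    then have "x - y = l" using i1[OF Zs_diff[OF x yz(1)]] i1 z(3) L by auto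
    then have "y \<in> relL V L `` {x}" unfolding relL_def using x yz z(3) by auto
    then show "z \<in> \<psi> ` (relL V L `` {x})" using yz by blast
  qed
qed

lemma tcard_invariant:
  assumes L: "L \<subseteq> Zs V" and a: "lin_aut V \<psi> \<phi>"
  shows "card (torsL V (\<psi> ` L) // relL V (\<psi> ` L)) = card (torsL V L // relL V L)"
proof -
  have inj: "inj_on \<psi> (Zs V)"
    by (rule la_inj[OF a])
  have TZ: "torsL V L \<subseteq> Zs V" unfolding torsL_def by blast
  have q: "torsL V (\<psi> ` L) // relL V (\<psi> ` L) = (image \<psi>) ` (torsL V L // relL V L)"
    unfolding tors_image[OF L a] quotient_def using rel_class_image[OF L a] TZ by auto
  have sub: "torsL V L // relL V L \<subseteq> Pow (Zs V)"
    unfolding quotient_def relL_def by auto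
  have "inj_on (image \<psi>) (torsL V L // relL V L)"
    using inj_on_subset[OF inj_on_image_Pow[OF inj] sub] .
  then show ?thesis unfolding q by (rule card_image)
qed

lemma rset_sub:
  assumes L: "L \<subseteq> Zs V" and a: "lin_aut V \<psi> \<phi>"
  shows "rsetL V L \<subseteq> rsetL V (\<psi> ` L)"
proof
  note Z1 = la_Z1[OF a] and Z2 = la_Z1[OF lin_aut_sym[OF a]] and sc1 = la_scale[OF a]
    and sc2 = la_scale[OF lin_aut_sym[OF a]] and i1 = la_inv1[OF a] and i2 = la_inv2[OF a]
    and d1 = la_diff[OF a] and lin = la_lin[OF a]
  have inj: "inj_on \<psi> (Zs V)"
    by (rule la_inj[OF a])
  fix n assume "n \<in> rsetL V L"
  then obtain S where S: "n = card S" "finite S" "S \<subseteq> Zs V"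
    and ind: "\<And>c. (\<lambda>w. \<Sum>s\<in>S. c s * s w) \<in> L \<Longrightarrow> (\<forall>s\<in>S. c s = 0)"
    unfolding rsetL_def by blast
  have injS: "inj_on \<psi> S" using inj_on_subset[OF inj S(3)] .
  have "card (\<psi> ` S) = n" using card_image[OF injS] S(1) by simp
  moreover have "finite (\<psi> ` S)" "\<psi> ` S \<subseteq> Zs V" using S Z1 by auto
  moreover have "\<forall>t\<in>\<psi> ` S. c t = 0" if h: "(\<lambda>w. \<Sum>t\<in>\<psi> ` S. c t * t w) \<in> \<psi> ` L" for c
  proof -
    have "(\<lambda>w. \<Sum>t\<in>\<psi> ` S. c t * t w) = (\<lambda>w. \<Sum>s\<in>S. c (\<psi> s) * \<psi> s w)"
      using sum.reindex[OF injS, of "\<lambda>t. c t * t w" for w] by (simp add: o_def)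
    also have "\<dots> = \<psi> (\<lambda>w. \<Sum>s\<in>S. c (\<psi> s) * s w)"
      using lin[OF S(2,3), of "\<lambda>s. c (\<psi> s)"] by simp
    finally obtain l where l: "l \<in> L" "\<psi> (\<lambda>w. \<Sum>s\<in>S. c (\<psi> s) * s w) = \<psi> l" using h by auto
    have "(\<lambda>w. \<Sum>s\<in>S. c (\<psi> s) * s w) \<in> Zs V" using Zs_sum[OF S(3)] .
    then have "(\<lambda>w. \<Sum>s\<in>S. c (\<psi> s) * s w) = l" using l i1 L by (metis subsetD)
    then have "\<forall>s\<in>S. c (\<psi> s) = 0" using ind[of "\<lambda>s. c (\<psi> s)"] l(1) by simp
    then show ?thesis by blast
  qed
  ultimately show "n \<in> rsetL V (\<psi> ` L)" unfolding rsetL_def by blast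
qed

lemma rset_invariant:
  assumes L: "L \<subseteq> Zs V" and a: "lin_aut V \<psi> \<phi>"
  shows "rsetL V (\<psi> ` L) = rsetL V L"
proof
  note Z1 = la_Z1[OF a] and Z2 = la_Z1[OF lin_aut_sym[OF a]] and sc1 = la_scale[OF a]
    and sc2 = la_scale[OF lin_aut_sym[OF a]] and i1 = la_inv1[OF a] and i2 = la_inv2[OF a]
    and d1 = la_diff[OF a] and lin = la_lin[OF a]
  show "rsetL V L \<subseteq> rsetL V (\<psi> ` L)" by (rule rset_sub[OF L a])
  have L': "\<psi> ` L \<subseteq> Zs V" using L Z1 by blast
  have "\<phi> ` \<psi> ` L = L" using i1 L by (force simp: image_image)
  then show "rsetL V (\<psi> ` L) \<subseteq> rsetL V L"
    using rset_sub[OF L' lin_aut_sym[OF a]] by simp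
qed

definition opm :: "'v set \<Rightarrow> ('v \<Rightarrow> 'v \<Rightarrow> int) \<Rightarrow> ('v \<Rightarrow> int) \<Rightarrow> ('v \<Rightarrow> int)" where
  "opm V N f = (\<lambda>w. if w \<in> V then \<Sum>v\<in>V. f v * N v w else 0)"

definition img :: "'v set \<Rightarrow> ('v \<Rightarrow> 'v \<Rightarrow> int) \<Rightarrow> ('v \<Rightarrow> int) set" where
  "img V N = opm V N ` Zs V"

definition rowadd :: "'v \<Rightarrow> 'v \<Rightarrow> int \<Rightarrow> ('v \<Rightarrow> 'v \<Rightarrow> int) \<Rightarrow> ('v \<Rightarrow> 'v \<Rightarrow> int)" where
  "rowadd i k c M = (\<lambda>v w. if v = k then M k w + c * M i w else M v w)"
definition coladd :: "'v \<Rightarrow> 'v \<Rightarrow> int \<Rightarrow> ('v \<Rightarrow> 'v \<Rightarrow> int) \<Rightarrow> ('v \<Rightarrow> 'v \<Rightarrow> int)" where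
  "coladd i k c M = (\<lambda>v w. if w = k then M v k + c * M v i else M v w)"
definition colswap :: "'v \<Rightarrow> 'v \<Rightarrow> ('v \<Rightarrow> 'v \<Rightarrow> int) \<Rightarrow> ('v \<Rightarrow> 'v \<Rightarrow> int)" where
  "colswap i k M = (\<lambda>v w. M v (transpose i k w))"

definition addk :: "'v \<Rightarrow> 'v \<Rightarrow> int \<Rightarrow> ('v \<Rightarrow> int) \<Rightarrow> ('v \<Rightarrow> int)" where
  "addk i k c g = g(k := g k + c * g i)"

lemma img_sub: "img V N \<subseteq> Zs V"
  unfolding img_def opm_def Zs_def by auto

lemma addk_Zs: "i \<in> V \<Longrightarrow> k \<in> V \<Longrightarrow> g \<in> Zs V \<Longrightarrow> addk i k c g \<in> Zs V"
  unfolding addk_def Zs_def by auto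

lemma addk_inv: "i \<noteq> k \<Longrightarrow> addk i k (-c) (addk i k c g) = g"
  unfolding addk_def by (auto simp: fun_eq_iff)

lemma linm_addk:
  assumes "i \<in> V" "k \<in> V"
  shows "linm V (addk i k c)"
  unfolding linm_def
proof (intro conjI allI impI ballI)
  show "addk i k c x \<in> Zs V" if "x \<in> Zs V" for x by (rule addk_Zs[OF assms that])
  show "addk i k c (\<lambda>w. \<Sum>s\<in>S. c' s * s w) = (\<lambda>w. \<Sum>s\<in>S. c' s * addk i k c s w)" for S c'
  proof (rule ext)
    fix w
    show "addk i k c (\<lambda>w. \<Sum>s\<in>S. c' s * s w) w = (\<Sum>s\<in>S. c' s * addk i k c s w)"
    proof (cases "w = k")
      case True
      then show ?thesis unfolding addk_def
        by (simp add: sum.distrib sum_distrib_left distrib_left mult.left_commute)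
    next
      case False
      then show ?thesis unfolding addk_def by simp
    qed
  qed
  show "addk i k c (x - y) = addk i k c x - addk i k c y" for x y
    unfolding addk_def by (simp add: fun_eq_iff right_diff_distrib)
  show "addk i k c (\<lambda>w. k' * x w) = (\<lambda>w. k' * addk i k c x w)" for k' x
    unfolding addk_def by (simp add: fun_eq_iff distrib_left mult.left_commute)
qed

lemma lin_aut_addk:
  assumes "i \<in> V" "k \<in> V" "i \<noteq> k"
  shows "lin_aut V (addk i k c) (addk i k (-c))"
  unfolding lin_aut_def using linm_addk[OF assms(1,2)] addk_inv[OF assms(3)] addk_inv[OF assms(3), of "-c"]
  by simp

definition swp :: "'v \<Rightarrow> 'v \<Rightarrow> ('v \<Rightarrow> int) \<Rightarrow> ('v \<Rightarrow> int)" where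
  "swp i k g = g \<circ> transpose i k"

lemma linm_swp:
  assumes "i \<in> V" "k \<in> V"
  shows "linm V (swp i k)"
  unfolding linm_def
proof (intro conjI allI impI ballI)
  show "swp i k x \<in> Zs V" if "x \<in> Zs V" for x
    using assms that unfolding swp_def Zs_def by (auto simp: transpose_def)
  show "swp i k (\<lambda>w. \<Sum>s\<in>S. c' s * s w) = (\<lambda>w. \<Sum>s\<in>S. c' s * swp i k s w)" for S c'
    unfolding swp_def by (auto simp: fun_eq_iff)
  show "swp i k (x - y) = swp i k x - swp i k y" for x y
    unfolding swp_def by (auto simp: fun_eq_iff)
  show "swp i k (\<lambda>w. k' * x w) = (\<lambda>w. k' * swp i k x w)" for k' x
    unfolding swp_def by (auto simp: fun_eq_iff)
qed

lemma lin_aut_swp: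
  assumes "i \<in> V" "k \<in> V"
  shows "lin_aut V (swp i k) (swp i k)"
  unfolding lin_aut_def using linm_swp[OF assms]
  by (simp add: swp_def fun_eq_iff)

lemma opm_rowadd:
  assumes "finite V" "i \<in> V" "k \<in> V" "i \<noteq> k"
  shows "opm V (rowadd i k c N) f = opm V N (addk k i c f)"
proof (rule ext)
  fix w
  have a: "(\<Sum>v\<in>V. f v * rowadd i k c N v w) = (\<Sum>v\<in>V. f v * N v w + (if v = k then f k * c * N i w else 0))"
    by (rule sum.cong) (auto simp: rowadd_def algebra_simps)
  have b: "(\<Sum>v\<in>V. addk k i c f v * N v w) = (\<Sum>v\<in>V. f v * N v w + (if v = i then c * f k * N i w else 0))"
    by (rule sum.cong) (auto simp: addk_def algebra_simps)
  show "opm V (rowadd i k c N) f w = opm V N (addk k i c f) w"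
    unfolding opm_def a b sum.distrib using assms by (simp add: sum.delta)
qed

lemma img_rowadd:
  assumes "finite V" "i \<in> V" "k \<in> V" "i \<noteq> k"
  shows "img V (rowadd i k c N) = img V N"
proof -
  have "addk k i c ` Zs V = Zs V"
  proof
    show "addk k i c ` Zs V \<subseteq> Zs V" using addk_Zs[OF assms(3,2)] by (rule image_subsetI)
    show "Zs V \<subseteq> addk k i c ` Zs V"
    proof
      fix g assume g: "g \<in> Zs V"
      have "g = addk k i c (addk k i (-c) g)" using addk_inv[of k i "-c" g] assms(4) by simp
      then show "g \<in> addk k i c ` Zs V" using addk_Zs[OF assms(3,2) g] by (rule image_eqI)
    qed
  qed
  then show ?thesis unfolding img_def using opm_rowadd[OF assms]
    by (metis (no_types, lifting) image_cong image_image)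
qed

lemma opm_coladd:
  assumes "finite V" "i \<in> V" "k \<in> V" "i \<noteq> k"
  shows "opm V (coladd i k c N) f = addk i k c (opm V N f)"
  unfolding opm_def addk_def coladd_def using assms
  by (auto simp: fun_eq_iff sum.distrib sum_distrib_left algebra_simps)

lemma img_coladd:
  assumes "finite V" "i \<in> V" "k \<in> V" "i \<noteq> k"
  shows "img V (coladd i k c N) = addk i k c ` img V N"
  unfolding img_def using opm_coladd[OF assms] by (simp add: image_image)

lemma opm_colswap:
  assumes "finite V" "i \<in> V" "k \<in> V"
  shows "opm V (colswap i k N) f = swp i k (opm V N f)"
  unfolding opm_def swp_def colswap_def using assms
  by (auto simp: fun_eq_iff transpose_def)

lemma img_colswap:
  assumes "finite V" "i \<in> V" "k \<in> V"
  shows "img V (colswap i k N) = swp i k ` img V N"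
  unfolding img_def using opm_colswap[OF assms] by (simp add: image_image)

definition pm :: "('v \<Rightarrow> 'v \<Rightarrow> int) \<Rightarrow> ('v \<Rightarrow> 'v \<Rightarrow> int) \<Rightarrow> 'v \<Rightarrow> 'v \<Rightarrow> int poly" where
  "pm N C = (\<lambda>v w. [:N v w, C v w:])"

definition estep :: "'v set \<Rightarrow> ('v \<Rightarrow> 'v \<Rightarrow> int) \<times> ('v \<Rightarrow> 'v \<Rightarrow> int) \<Rightarrow> ('v \<Rightarrow> 'v \<Rightarrow> int) \<times> ('v \<Rightarrow> 'v \<Rightarrow> int) \<Rightarrow> bool" where
  "estep V p q \<longleftrightarrow> (\<exists>i k c. i \<in> V \<and> k \<in> V \<and> i \<noteq> k \<and>
     (q = (rowadd i k c (fst p), rowadd i k c (snd p)) \<or>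
      q = (coladd i k c (fst p), coladd i k c (snd p)) \<or>
      q = (colswap i k (fst p), colswap i k (snd p))))"

definition invr :: "'v set \<Rightarrow> ('v \<Rightarrow> 'v \<Rightarrow> int) \<times> ('v \<Rightarrow> 'v \<Rightarrow> int) \<Rightarrow> ('v \<Rightarrow> 'v \<Rightarrow> int) \<times> ('v \<Rightarrow> 'v \<Rightarrow> int) \<Rightarrow> bool" where
  "invr V p q \<longleftrightarrow>
     card (torsL V (img V (fst q)) // relL V (img V (fst q))) = card (torsL V (img V (fst p)) // relL V (img V (fst p))) \<and>
     rsetL V (img V (fst q)) = rsetL V (img V (fst p)) \<and>
     (det_on V (pm (fst q) (snd q)) = det_on V (pm (fst p) (snd p)) \<or> det_on V (pm (fst q) (snd q)) = - det_on V (pm (fst p) (snd p)))"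

lemma invr_refl: "invr V p p" unfolding invr_def by simp

lemma invr_trans: "invr V p q \<Longrightarrow> invr V q r \<Longrightarrow> invr V p r"
  unfolding invr_def by auto

lemma pm_rowadd: "pm (rowadd i k c N) (rowadd i k c C) = (\<lambda>v w. if v = k then pm N C k w + [:c:] * pm N C i w else pm N C v w)"
  unfolding pm_def rowadd_def by (auto simp: fun_eq_iff)

lemma pm_coladd: "pm (coladd i k c N) (coladd i k c C) = (\<lambda>v w. if w = k then pm N C v k + [:c:] * pm N C v i else pm N C v w)"
  unfolding pm_def coladd_def by (auto simp: fun_eq_iff)

lemma pm_colswap: "pm (colswap i k N) (colswap i k C) = (\<lambda>v w. pm N C v (transpose i k w))"
  unfolding pm_def colswap_def by (auto simp: fun_eq_iff)

lemma estep_invr: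
  assumes "finite V" "estep V p q"
  shows "invr V p q"
proof -
  obtain N C where p: "p = (N, C)" by (cases p)
  from assms(2) obtain i k c where ik: "i \<in> V" "k \<in> V" "i \<noteq> k" and
    q: "q = (rowadd i k c N, rowadd i k c C) \<or> q = (coladd i k c N, coladd i k c C) \<or> q = (colswap i k N, colswap i k C)"
    unfolding estep_def p by auto
  have L: "img V N \<subseteq> Zs V" by (rule img_sub)
  from q show ?thesis
  proof (elim disjE)
    assume q: "q = (rowadd i k c N, rowadd i k c C)"
    show ?thesis unfolding invr_def p q fst_conv snd_conv img_rowadd[OF assms(1) ik] pm_rowadd
      using det_on_rowadd[OF assms(1) ik, of "pm N C" "[:c:]"] by simp
  next
    assume q: "q = (coladd i k c N, coladd i k c C)"
    show ?thesis unfolding invr_def p q fst_conv snd_conv img_coladd[OF assms(1) ik] pm_coladd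
      using det_on_coladd[OF assms(1) ik, of "pm N C" "[:c:]"]
        tcard_invariant[OF L lin_aut_addk[OF ik]] rset_invariant[OF L lin_aut_addk[OF ik]] by simp
  next
    assume q: "q = (colswap i k N, colswap i k C)"
    show ?thesis unfolding invr_def p q fst_conv snd_conv img_colswap[OF assms(1) ik(1,2)] pm_colswap
      using det_on_colswap[OF assms(1) ik, of "pm N C"]
        tcard_invariant[OF L lin_aut_swp[OF ik(1,2)]] rset_invariant[OF L lin_aut_swp[OF ik(1,2)]] by simp
  qed
qed

lemma reach_invr:
  assumes "finite V" "(estep V)\<^sup>*\<^sup>* p q"
  shows "invr V p q"
  using assms(2)
proof (induction rule: rtranclp_induct)
  case base
  then show ?case by (rule invr_refl)
next
  case (step y z)
  then show ?case using invr_trans estep_invr[OF assms(1)] by blast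
qed

abbreviation reach :: "'v set \<Rightarrow> ('v \<Rightarrow> 'v \<Rightarrow> int) \<times> ('v \<Rightarrow> 'v \<Rightarrow> int) \<Rightarrow> ('v \<Rightarrow> 'v \<Rightarrow> int) \<times> ('v \<Rightarrow> 'v \<Rightarrow> int) \<Rightarrow> bool" where
  "reach V \<equiv> (estep V)\<^sup>*\<^sup>*"

definition diag_out :: "'v set \<Rightarrow> 'v set \<Rightarrow> ('v \<Rightarrow> 'v \<Rightarrow> int) \<Rightarrow> bool" where
  "diag_out V W N \<longleftrightarrow> (\<forall>v\<in>V. \<forall>w\<in>V. v \<noteq> w \<longrightarrow> (v \<notin> W \<or> w \<notin> W) \<longrightarrow> N v w = 0)"

definition diag :: "'v set \<Rightarrow> ('v \<Rightarrow> 'v \<Rightarrow> int) \<Rightarrow> bool" where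
  "diag V N \<longleftrightarrow> (\<forall>v\<in>V. \<forall>w\<in>V. v \<noteq> w \<longrightarrow> N v w = 0)"

lemma reach_rowadd:
  "i \<in> V \<Longrightarrow> k \<in> V \<Longrightarrow> i \<noteq> k \<Longrightarrow> reach V (N, C) (rowadd i k c N, rowadd i k c C)"
  unfolding estep_def
  by (rule r_into_rtranclp) (intro exI[of _ i] exI[of _ k] exI[of _ c], simp)

lemma reach_coladd:
  "i \<in> V \<Longrightarrow> k \<in> V \<Longrightarrow> i \<noteq> k \<Longrightarrow> reach V (N, C) (coladd i k c N, coladd i k c C)"
  unfolding estep_def
  by (rule r_into_rtranclp) (intro exI[of _ i] exI[of _ k] exI[of _ c], simp)

lemma reach_colswap:
  "i \<in> V \<Longrightarrow> k \<in> V \<Longrightarrow> i \<noteq> k \<Longrightarrow> reach V (N, C) (colswap i k N, colswap i k C)"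
  unfolding estep_def
  by (rule r_into_rtranclp) (intro exI[of _ i] exI[of _ k] exI[of _ 0], simp)

lemma diag_out_rowadd:
  assumes "diag_out V W N" "W \<subseteq> V" "i \<in> W" "k \<in> W"
  shows "diag_out V W (rowadd i k c N)"
  unfolding diag_out_def
proof (intro ballI impI)
  fix v w assume vw: "v \<in> V" "w \<in> V" "v \<noteq> w" "v \<notin> W \<or> w \<notin> W"
  show "rowadd i k c N v w = 0"
  proof (cases "v = k")
    case True
    then have w: "w \<notin> W" using vw assms(4) by auto
    then have "w \<noteq> i" "w \<noteq> k" using assms(3,4) by auto
    moreover have "i \<in> V" "k \<in> V" using assms by auto
    ultimately have "N k w = 0" "N i w = 0" using assms(1) vw w unfolding diag_out_def by auto
    then show ?thesis using True unfolding rowadd_def by simp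
  next
    case False
    then show ?thesis using assms(1) vw unfolding diag_out_def rowadd_def by auto
  qed
qed

lemma diag_out_coladd:
  assumes "diag_out V W N" "W \<subseteq> V" "i \<in> W" "k \<in> W"
  shows "diag_out V W (coladd i k c N)"
  unfolding diag_out_def
proof (intro ballI impI)
  fix v w assume vw: "v \<in> V" "w \<in> V" "v \<noteq> w" "v \<notin> W \<or> w \<notin> W"
  show "coladd i k c N v w = 0"
  proof (cases "w = k")
    case True
    then have v: "v \<notin> W" using vw assms(4) by auto
    then have "v \<noteq> i" "v \<noteq> k" using assms(3,4) by auto
    moreover have "i \<in> V" "k \<in> V" using assms by auto
    ultimately have "N v k = 0" "N v i = 0" using assms(1) vw v unfolding diag_out_def by auto
    then show ?thesis using True unfolding coladd_def by simp
  next
    case False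
    then show ?thesis using assms(1) vw unfolding diag_out_def coladd_def by auto
  qed
qed

lemma mod_step: "(x::int) + (- (x div e)) * e = x mod e"
  by (metis add.commute add_diff_cancel_right' div_mult_mod_eq mult_minus_left uminus_add_conv_diff)

lemma clear_col:
  assumes "finite R"
  shows "R \<subseteq> W - {p} \<Longrightarrow> W \<subseteq> V \<Longrightarrow> p \<in> W \<Longrightarrow> q \<in> W \<Longrightarrow> N p q \<noteq> 0 \<Longrightarrow>
    (\<forall>v\<in>R. N p q dvd N v q) \<Longrightarrow> diag_out V W N \<Longrightarrow>
    \<exists>N' C'. reach V (N, C) (N', C') \<and> diag_out V W N' \<and> (\<forall>v\<in>R. N' v q = 0) \<and> (\<forall>v. v \<notin> R \<longrightarrow> N' v = N v)"
  using assms
proof (induction R rule: finite_induct)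
  case empty
  then show ?case by blast
next
  case (insert x R)
  from insert.IH[OF _ insert.prems(2-5) _ insert.prems(7)] insert.prems(1,6)
  obtain N1 C1 where N1: "reach V (N, C) (N1, C1)" "diag_out V W N1" "\<forall>v\<in>R. N1 v q = 0"
     "\<forall>v. v \<notin> R \<longrightarrow> N1 v = N v" by auto
  have x: "x \<in> W" "x \<noteq> p" using insert.prems(1) by auto
  have N1x: "N1 x = N x" "N1 p = N p" using N1(4) insert.hyps(2) insert.prems(1) by auto
  define d where "d = - (N x q div N p q)"
  define N2 where "N2 = rowadd p x d N1"
  define C2 where "C2 = rowadd p x d C1"
  have "reach V (N1, C1) (N2, C2)" unfolding N2_def C2_def
    by (rule reach_rowadd) (use x insert.prems(2,3) in auto)
  then have r: "reach V (N, C) (N2, C2)" using N1(1) by simp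
  have dg: "diag_out V W N2" unfolding N2_def
    by (rule diag_out_rowadd[OF N1(2) insert.prems(2,3) x(1)])
  have "N p q dvd N x q" using insert.prems(6) by simp
  then have "N2 x q = 0" unfolding N2_def rowadd_def d_def using N1x mod_step[of "N x q" "N p q"]
    by simp
  moreover have "\<forall>v\<in>R. N2 v q = 0" using N1(3) insert.hyps(2) unfolding N2_def rowadd_def by auto
  moreover have "\<forall>v. v \<notin> insert x R \<longrightarrow> N2 v = N v" using N1(4) unfolding N2_def rowadd_def by (auto simp: fun_eq_iff)
  ultimately show ?case using r dg by auto
qed

lemma clear_row:
  assumes "finite R"
  shows "R \<subseteq> W - {q} \<Longrightarrow> W \<subseteq> V \<Longrightarrow> p \<in> W \<Longrightarrow> q \<in> W \<Longrightarrow> N p q \<noteq> 0 \<Longrightarrow>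
    (\<forall>w\<in>R. N p q dvd N p w) \<Longrightarrow> (\<forall>x\<in>V. x \<noteq> p \<longrightarrow> N x q = 0) \<Longrightarrow> diag_out V W N \<Longrightarrow>
    \<exists>N' C'. reach V (N, C) (N', C') \<and> diag_out V W N' \<and> (\<forall>w\<in>R. N' p w = 0) \<and>
       (\<forall>x y. y \<notin> R \<longrightarrow> N' x y = N x y) \<and> (\<forall>x\<in>V. \<forall>y. x \<noteq> p \<longrightarrow> N' x y = N x y)"
  using assms
proof (induction R rule: finite_induct)
  case empty
  then show ?case by blast
next
  case (insert x R)
  from insert.IH[OF _ insert.prems(2-5) _ insert.prems(7,8)] insert.prems(1,6)
  obtain N1 C1 where N1: "reach V (N, C) (N1, C1)" "diag_out V W N1" "\<forall>w\<in>R. N1 p w = 0"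
     "\<forall>a b. b \<notin> R \<longrightarrow> N1 a b = N a b" "\<forall>a\<in>V. \<forall>b. a \<noteq> p \<longrightarrow> N1 a b = N a b" by auto
  have x: "x \<in> W" "x \<noteq> q" using insert.prems(1) by auto
  have qR: "q \<notin> R" using insert.prems(1) by auto
  have N1x: "N1 p x = N p x" "\<And>a. N1 a q = N a q" using N1(4) insert.hyps(2) qR by auto
  define d where "d = - (N p x div N p q)"
  define N2 where "N2 = coladd q x d N1"
  define C2 where "C2 = coladd q x d C1"
  have "reach V (N1, C1) (N2, C2)" unfolding N2_def C2_def
    by (rule reach_coladd) (use x insert.prems(2,4) in auto)
  then have r: "reach V (N, C) (N2, C2)" using N1(1) by simp
  have dg: "diag_out V W N2" unfolding N2_def
    by (rule diag_out_coladd[OF N1(2) insert.prems(2,4) x(1)])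
  have "N p q dvd N p x" using insert.prems(6) by simp
  then have "N2 p x = 0" unfolding N2_def coladd_def d_def using N1x mod_step[of "N p x" "N p q"]
    by simp
  moreover have "\<forall>w\<in>R. N2 p w = 0" using N1(3) insert.hyps(2) unfolding N2_def coladd_def by auto
  moreover have "\<forall>a b. b \<notin> insert x R \<longrightarrow> N2 a b = N a b" using N1(4) unfolding N2_def coladd_def by auto
  moreover have "\<forall>a\<in>V. \<forall>b. a \<noteq> p \<longrightarrow> N2 a b = N a b"
  proof (intro ballI allI impI)
    fix a b assume a: "a \<in> V" "a \<noteq> p"
    show "N2 a b = N a b"
    proof (cases "b = x")
      case True
      have "N1 a q = 0" using N1x(2) insert.prems(7) a by simp
      then show ?thesis using True N1(5) a unfolding N2_def coladd_def by simp
    next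
      case False
      then show ?thesis using N1(5) a unfolding N2_def coladd_def by simp
    qed
  qed
  ultimately show ?case using r dg by blast
qed

lemma inner_step:
  fixes n :: nat
  assumes "finite V" "W \<subseteq> V"
  shows "diag_out V W N \<Longrightarrow> p \<in> W \<Longrightarrow> q \<in> W \<Longrightarrow> N p q \<noteq> 0 \<Longrightarrow> nat \<bar>N p q\<bar> = n \<Longrightarrow>
    \<exists>N' C' a. a \<in> W \<and> reach V (N, C) (N', C') \<and> diag_out V (W - {a}) N'"
proof (induction n arbitrary: N C p q rule: less_induct)
  case (less n)
  let ?e = "N p q"
  have fW: "finite W" using assms finite_subset by blast
  show ?case
  proof (cases "\<exists>v\<in>W. v \<noteq> p \<and> \<not> ?e dvd N v q")
    case True
    then obtain v where v: "v \<in> W" "v \<noteq> p" "\<not> ?e dvd N v q" by blast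
    define d where "d = - (N v q div ?e)"
    define N1 where "N1 = rowadd p v d N"
    define C1 where "C1 = rowadd p v d C"
    have r: "reach V (N, C) (N1, C1)" unfolding N1_def C1_def
      by (rule reach_rowadd) (use v less.prems(2) assms(2) in auto)
    have dg: "diag_out V W N1" unfolding N1_def
      by (rule diag_out_rowadd[OF less.prems(1) assms(2) less.prems(2) v(1)])
    have e1: "N1 v q = N v q mod ?e" unfolding N1_def rowadd_def d_def using v(2) mod_step[of "N v q" ?e] by simp
    have nz: "N1 v q \<noteq> 0" using e1 v(3) by (simp add: dvd_eq_mod_eq_0)
    have "\<bar>N1 v q\<bar> < \<bar>?e\<bar>" using e1 abs_mod_less[OF less.prems(4)] by simp
    then have lt: "nat \<bar>N1 v q\<bar> < n" using less.prems(5) by simp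
    from less.IH[OF lt dg v(1) less.prems(3) nz refl, of C1]
    obtain N' C' a where "a \<in> W" "reach V (N1, C1) (N', C')" "diag_out V (W - {a}) N'" by blast
    then show ?thesis using r by (meson rtranclp_trans)
  next
    case False
    note F1 = False
    show ?thesis
    proof (cases "\<exists>w\<in>W. w \<noteq> q \<and> \<not> ?e dvd N p w")
      case True
      then obtain w where w: "w \<in> W" "w \<noteq> q" "\<not> ?e dvd N p w" by blast
      define d where "d = - (N p w div ?e)"
      define N1 where "N1 = coladd q w d N"
      define C1 where "C1 = coladd q w d C"
      have r: "reach V (N, C) (N1, C1)" unfolding N1_def C1_def
        by (rule reach_coladd) (use w less.prems(3) assms(2) in auto)
      have dg: "diag_out V W N1" unfolding N1_def
        by (rule diag_out_coladd[OF less.prems(1) assms(2) less.prems(3) w(1)])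
      have e1: "N1 p w = N p w mod ?e" unfolding N1_def coladd_def d_def using w(2) mod_step[of "N p w" ?e] by simp
      have nz: "N1 p w \<noteq> 0" using e1 w(3) by (simp add: dvd_eq_mod_eq_0)
      have "\<bar>N1 p w\<bar> < \<bar>?e\<bar>" using e1 abs_mod_less[OF less.prems(4)] by simp
      then have lt: "nat \<bar>N1 p w\<bar> < n" using less.prems(5) by simp
      from less.IH[OF lt dg less.prems(2) w(1) nz refl, of C1]
      obtain N' C' a where "a \<in> W" "reach V (N1, C1) (N', C')" "diag_out V (W - {a}) N'" by blast
      then show ?thesis using r by (meson rtranclp_trans)
    next
      case False
      note F2 = False
      have dcol: "\<forall>v\<in>W - {p}. ?e dvd N v q" using F1 by blast
      have drow: "\<forall>w\<in>W - {q}. ?e dvd N p w" using F2 by blast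
      from clear_col[of "W - {p}" W p V q N C] fW less.prems(1-4) assms(2) dcol
      obtain N1 C1 where N1: "reach V (N, C) (N1, C1)" "diag_out V W N1" "\<forall>v\<in>W - {p}. N1 v q = 0"
        "\<forall>v. v \<notin> W - {p} \<longrightarrow> N1 v = N v" by auto
      have N1p: "N1 p = N p" using N1(4) by simp
      have colz: "\<forall>x\<in>V. x \<noteq> p \<longrightarrow> N1 x q = 0"
      proof (intro ballI impI)
        fix x assume x: "x \<in> V" "x \<noteq> p"
        show "N1 x q = 0"
        proof (cases "x \<in> W")
          case True then show ?thesis using N1(3) x by auto
        next
          case False
          then have "x \<noteq> q" using less.prems(3) by auto
          then show ?thesis using N1(2) x less.prems(3) assms(2) False unfolding diag_out_def by (metis subsetD)
        qed
      qed
      from clear_row[of "W - {q}" W q V p N1 C1] fW less.prems(2-4) assms(2) drow N1p colz N1(2)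
      obtain N2 C2 where N2: "reach V (N1, C1) (N2, C2)" "diag_out V W N2" "\<forall>w\<in>W - {q}. N2 p w = 0"
        "\<forall>x y. y \<notin> W - {q} \<longrightarrow> N2 x y = N1 x y" "\<forall>x\<in>V. \<forall>y. x \<noteq> p \<longrightarrow> N2 x y = N1 x y" by auto
      have r2: "reach V (N, C) (N2, C2)" using N1(1) N2(1) by (meson rtranclp_trans)
      have rowz: "\<forall>y\<in>V. y \<noteq> q \<longrightarrow> N2 p y = 0"
      proof (intro ballI impI)
        fix y assume y: "y \<in> V" "y \<noteq> q"
        show "N2 p y = 0"
        proof (cases "y \<in> W")
          case True then show ?thesis using N2(3) y by auto
        next
          case False then show ?thesis using N2(2) y less.prems(2) assms(2) unfolding diag_out_def by auto
        qed
      qed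
      have colz2: "\<forall>x\<in>V. x \<noteq> p \<longrightarrow> N2 x q = 0" using colz N2(4) by auto
      show ?thesis
      proof (cases "p = q")
        case True
        have "diag_out V (W - {p}) N2" unfolding diag_out_def
        proof (intro ballI impI)
          fix v w assume vw: "v \<in> V" "w \<in> V" "v \<noteq> w" "v \<notin> W - {p} \<or> w \<notin> W - {p}"
          show "N2 v w = 0"
          proof (cases "v = p")
            case True then show ?thesis using rowz vw \<open>p = q\<close> by auto
          next
            case False
            show ?thesis
            proof (cases "w = p")
              case True
              have "N2 v q = 0" using colz2 vw(1) \<open>v \<noteq> p\<close> by blast
              then show ?thesis using True \<open>p = q\<close> by simp
            next
              case False then show ?thesis using N2(2) vw \<open>v \<noteq> p\<close> unfolding diag_out_def by auto
            qed
          qed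
        qed
        then show ?thesis using r2 less.prems(2) by blast
      next
        case False
        define N3 where "N3 = colswap p q N2"
        define C3 where "C3 = colswap p q C2"
        have "reach V (N2, C2) (N3, C3)" unfolding N3_def C3_def
          by (rule reach_colswap) (use False less.prems(2,3) assms(2) in auto)
        then have r3: "reach V (N, C) (N3, C3)" using r2 by (meson rtranclp_trans)
        have pV: "p \<in> V" "q \<in> V" using less.prems(2,3) assms(2) by auto
        have "diag_out V (W - {p}) N3" unfolding diag_out_def
        proof (intro ballI impI)
          fix v w assume vw: "v \<in> V" "w \<in> V" "v \<noteq> w" "v \<notin> W - {p} \<or> w \<notin> W - {p}"
          have tw: "transpose p q w \<in> V" using vw(2) pV by (auto simp: transpose_def)
          show "N3 v w = 0"
          proof (cases "v = p")
            case True
            then have "transpose p q w \<noteq> q" using vw(3) by (auto simp: transpose_def)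
            then show ?thesis using rowz tw True unfolding N3_def colswap_def by auto
          next
            case vp: False
            show ?thesis
            proof (cases "w = p")
              case True then show ?thesis using colz2 vw vp unfolding N3_def colswap_def by auto
            next
              case wp: False
              show ?thesis
              proof (cases "w = q")
                case True
                then have "v \<notin> W" using vw vp less.prems(3) \<open>p \<noteq> q\<close> by auto
                then show ?thesis using N2(2) vw vp True pV unfolding N3_def colswap_def diag_out_def by auto
              next
                case False
                then have "transpose p q w = w" using wp by (auto simp: transpose_def)
                then show ?thesis using N2(2) vw vp wp unfolding N3_def colswap_def diag_out_def by auto
              qed
            qed
          qed
        qed
        then show ?thesis using r3 less.prems(2) by blast
      qed
    qed
  qed
qed

lemma diag_exists_W:
  assumes "finite V"
  shows "W \<subseteq> V \<Longrightarrow> diag_out V W N \<Longrightarrow> \<exists>N' C'. reach V (N, C) (N', C') \<and> diag V N'"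
proof (induction "card W" arbitrary: W N C rule: less_induct)
  case less
  have fW: "finite W" using assms less.prems(1) finite_subset by blast
  show ?case
  proof (cases "\<exists>p\<in>W. \<exists>q\<in>W. N p q \<noteq> 0")
    case False
    have "diag V N" unfolding diag_def
    proof (intro ballI impI)
      fix v w assume vw: "v \<in> V" "w \<in> V" "v \<noteq> w"
      show "N v w = 0"
      proof (cases "v \<in> W \<and> w \<in> W")
        case True then show ?thesis using False by auto
      next
        case False then show ?thesis using less.prems(2) vw unfolding diag_out_def by auto
      qed
    qed
    then show ?thesis by blast
  next
    case True
    then obtain p q where pq: "p \<in> W" "q \<in> W" "N p q \<noteq> 0" by blast
    from inner_step[OF assms less.prems(1) less.prems(2) pq refl, of C]
    obtain N1 C1 a where a: "a \<in> W" "reach V (N, C) (N1, C1)" "diag_out V (W - {a}) N1" by blast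
    have "card (W - {a}) < card W" by (rule card_Diff1_less[OF fW a(1)])
    from less.hyps[OF this _ a(3), of C1] less.prems(1)
    obtain N' C' where "reach V (N1, C1) (N', C')" "diag V N'" by auto
    then show ?thesis using a(2) by (meson rtranclp_trans)
  qed
qed

lemma diag_exists:
  assumes "finite V"
  shows "\<exists>N' C'. reach V (N, C) (N', C') \<and> diag V N'"
  by (rule diag_exists_W[OF assms subset_refl]) (simp add: diag_out_def)

lemma int_dep:
  fixes x :: "'i \<Rightarrow> 'v \<Rightarrow> int"
  assumes "finite Z"
  shows "finite I \<Longrightarrow> card Z < card I \<Longrightarrow> \<exists>c. (\<exists>i\<in>I. c i \<noteq> 0) \<and> (\<forall>w\<in>Z. (\<Sum>i\<in>I. c i * x i w) = 0)"
  using assms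
proof (induction Z arbitrary: I x rule: finite_induct)
  case empty
  then have "I \<noteq> {}" by auto
  then obtain i where "i \<in> I" by blast
  then show ?case by (intro exI[of _ "\<lambda>_. 1"]) auto
next
  case (insert z Z)
  have cI: "card Z < card I" using insert.prems(2) insert.hyps by simp
  show ?case
  proof (cases "\<forall>i\<in>I. x i z = 0")
    case True
    from insert.IH[OF insert.prems(1) cI, of x]
    obtain c where c: "\<exists>i\<in>I. c i \<noteq> 0" "\<forall>w\<in>Z. (\<Sum>i\<in>I. c i * x i w) = 0" by blast
    have "(\<Sum>i\<in>I. c i * x i z) = 0" using True by simp
    then show ?thesis using c by auto
  next
    case False
    then obtain i0 where i0: "i0 \<in> I" "x i0 z \<noteq> 0" by blast
    define a where "a = x i0 z"
    define I' where "I' = I - {i0}"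
    define x' where "x' = (\<lambda>i w. a * x i w - x i z * x i0 w)"
    have fI': "finite I'" using insert.prems(1) unfolding I'_def by simp
    have cI': "card Z < card I'" unfolding I'_def using insert.prems(1,2) i0(1) insert.hyps(1,2)
      by (simp add: card_Diff_singleton)
    from insert.IH[OF fI' cI', of x']
    obtain c' where c': "\<exists>i\<in>I'. c' i \<noteq> 0" "\<forall>w\<in>Z. (\<Sum>i\<in>I'. c' i * x' i w) = 0" by blast
    define c where "c = (\<lambda>i. if i = i0 then - (\<Sum>j\<in>I'. c' j * x j z) else a * c' i)"
    have key: "(\<Sum>i\<in>I. c i * x i w) = (\<Sum>i\<in>I'. c' i * x' i w)" for w
    proof -
      have "(\<Sum>i\<in>I. c i * x i w) = c i0 * x i0 w + (\<Sum>i\<in>I'. c i * x i w)"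
        unfolding I'_def by (rule sum.remove[OF insert.prems(1) i0(1)])
      also have "(\<Sum>i\<in>I'. c i * x i w) = (\<Sum>i\<in>I'. a * c' i * x i w)"
        by (rule sum.cong) (auto simp: c_def I'_def)
      also have "c i0 * x i0 w = - (\<Sum>j\<in>I'. c' j * x j z * x i0 w)"
        unfolding c_def by (simp add: sum_distrib_right)
      finally have "(\<Sum>i\<in>I. c i * x i w) = (\<Sum>i\<in>I'. a * c' i * x i w) - (\<Sum>j\<in>I'. c' j * x j z * x i0 w)"
        by simp
      also have "\<dots> = (\<Sum>i\<in>I'. a * c' i * x i w - c' i * x i z * x i0 w)"
        by (simp add: sum_subtractf)
      also have "\<dots> = (\<Sum>i\<in>I'. c' i * x' i w)"
        by (rule sum.cong) (auto simp: x'_def algebra_simps)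
      finally show ?thesis .
    qed
    have "\<forall>w\<in>insert z Z. (\<Sum>i\<in>I. c i * x i w) = 0"
    proof
      fix w assume "w \<in> insert z Z"
      then show "(\<Sum>i\<in>I. c i * x i w) = 0"
      proof
        assume "w = z"
        have "(\<Sum>i\<in>I'. c' i * x' i w) = 0" unfolding x'_def a_def \<open>w = z\<close> by (simp add: algebra_simps)
        then show ?thesis using key by simp
      next
        assume "w \<in> Z" then show ?thesis using key c'(2) by simp
      qed
    qed
    moreover have "\<exists>i\<in>I. c i \<noteq> 0"
    proof -
      obtain j where j: "j \<in> I'" "c' j \<noteq> 0" using c'(1) by blast
      then have "c j = a * c' j" "j \<in> I" unfolding c_def I'_def by auto
      then show ?thesis using j(2) i0(2) a_def by (intro bexI[of _ j]) auto
    qed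
    ultimately show ?thesis by blast
  qed
qed

context
  fixes V :: "'v set" and N :: "'v \<Rightarrow> 'v \<Rightarrow> int"
  assumes fin: "finite V" and dg: "diag V N"
begin

lemma opm_diag: "opm V N f = (\<lambda>w. if w \<in> V then f w * N w w else 0)"
proof (rule ext)
  fix w
  show "opm V N f w = (if w \<in> V then f w * N w w else 0)"
  proof (cases "w \<in> V")
    case True
    have "(\<Sum>v\<in>V. f v * N v w) = (\<Sum>v\<in>V. if v = w then f w * N w w else 0)"
      by (rule sum.cong) (use dg True in \<open>auto simp: diag_def\<close>)
    then show ?thesis unfolding opm_def using True fin by simp
  next
    case False then show ?thesis unfolding opm_def by simp
  qed
qed

lemma img_diag: "img V N = {g \<in> Zs V. \<forall>v\<in>V. N v v dvd g v}"
proof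
  show "img V N \<subseteq> {g \<in> Zs V. \<forall>v\<in>V. N v v dvd g v}"
    unfolding img_def opm_diag Zs_def by auto
  show "{g \<in> Zs V. \<forall>v\<in>V. N v v dvd g v} \<subseteq> img V N"
  proof
    fix g assume g: "g \<in> {g \<in> Zs V. \<forall>v\<in>V. N v v dvd g v}"
    define f where "f = (\<lambda>w. if w \<in> V \<and> N w w \<noteq> 0 then g w div N w w else 0)"
    have "f \<in> Zs V" unfolding f_def Zs_def by auto
    moreover have "opm V N f = g"
    proof (rule ext)
      fix w
      show "opm V N f w = g w"
      proof (cases "w \<in> V")
        case True
        then have d: "N w w dvd g w" using g by auto
        show ?thesis
        proof (cases "N w w = 0")
          case True then show ?thesis using d \<open>w \<in> V\<close> unfolding opm_diag f_def by simp
        next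
          case False then show ?thesis using d \<open>w \<in> V\<close> unfolding opm_diag f_def by simp
        qed
      next
        case False then show ?thesis using g unfolding opm_diag Zs_def by simp
      qed
    qed
    ultimately show "g \<in> img V N" unfolding img_def by (metis image_eqI)
  qed
qed

definition Kd :: int where "Kd = (\<Prod>v\<in>{v\<in>V. N v v \<noteq> 0}. N v v)"

lemma Kd_nz: "Kd \<noteq> 0"
  unfolding Kd_def using fin by (simp add: prod_zero_iff)

lemma Kd_dvd: "v \<in> V \<Longrightarrow> N v v \<noteq> 0 \<Longrightarrow> N v v dvd Kd"
  unfolding Kd_def by (rule dvd_prodI) (use fin in auto)

lemma tors_diag: "torsL V (img V N) = {x \<in> Zs V. \<forall>v\<in>V. N v v = 0 \<longrightarrow> x v = 0}"
proof
  show "torsL V (img V N) \<subseteq> {x \<in> Zs V. \<forall>v\<in>V. N v v = 0 \<longrightarrow> x v = 0}"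
  proof
    fix x assume "x \<in> torsL V (img V N)"
    then obtain k where x: "x \<in> Zs V" "k \<noteq> 0" "\<forall>v\<in>V. N v v dvd k * x v"
      unfolding torsL_def img_diag by auto
    then show "x \<in> {x \<in> Zs V. \<forall>v\<in>V. N v v = 0 \<longrightarrow> x v = 0}" by auto
  qed
  show "{x \<in> Zs V. \<forall>v\<in>V. N v v = 0 \<longrightarrow> x v = 0} \<subseteq> torsL V (img V N)"
  proof
    fix x assume x: "x \<in> {x \<in> Zs V. \<forall>v\<in>V. N v v = 0 \<longrightarrow> x v = 0}"
    have "(\<lambda>w. Kd * x w) \<in> img V N"
      unfolding img_diag
    proof (intro CollectI conjI ballI)
      show "(\<lambda>w. Kd * x w) \<in> Zs V" using x Zs_scale by blast
      fix v assume v: "v \<in> V"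
      show "N v v dvd Kd * x v"
      proof (cases "N v v = 0")
        case True then show ?thesis using x v by simp
      next
        case False then show ?thesis using Kd_dvd[OF v False] by simp
      qed
    qed
    then show "x \<in> torsL V (img V N)" unfolding torsL_def using x Kd_nz by blast
  qed
qed


definition Fm :: "('v \<Rightarrow> int) \<Rightarrow> 'v \<Rightarrow> int" where
  "Fm y = restrict (\<lambda>v. y v mod \<bar>N v v\<bar>) {v\<in>V. N v v \<noteq> 0}"

lemma dvd_mod_abs: "(d::int) dvd a - b \<longleftrightarrow> a mod \<bar>d\<bar> = b mod \<bar>d\<bar>"
  by (simp add: mod_eq_dvd_iff)

lemma rel_class_diag:
  assumes x: "x \<in> torsL V (img V N)"
  shows "relL V (img V N) `` {x} = {y \<in> torsL V (img V N). Fm y = Fm x}"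
proof
  have xZ: "x \<in> Zs V" "\<forall>v\<in>V. N v v = 0 \<longrightarrow> x v = 0" using x unfolding tors_diag by auto
  show "relL V (img V N) `` {x} \<subseteq> {y \<in> torsL V (img V N). Fm y = Fm x}"
  proof
    fix y assume "y \<in> relL V (img V N) `` {x}"
    then have y: "y \<in> Zs V" "\<forall>v\<in>V. N v v dvd x v - y v"
      unfolding relL_def img_diag by auto
    have "y \<in> torsL V (img V N)" unfolding tors_diag using y xZ by auto
    moreover have "Fm y = Fm x" unfolding Fm_def
      by (rule restrict_ext) (use y(2) dvd_mod_abs in auto)
    ultimately show "y \<in> {y \<in> torsL V (img V N). Fm y = Fm x}" by blast
  qed
  show "{y \<in> torsL V (img V N). Fm y = Fm x} \<subseteq> relL V (img V N) `` {x}"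
  proof
    fix y assume "y \<in> {y \<in> torsL V (img V N). Fm y = Fm x}"
    then have y: "y \<in> Zs V" "\<forall>v\<in>V. N v v = 0 \<longrightarrow> y v = 0" "Fm y = Fm x"
      unfolding tors_diag by auto
    have "\<forall>v\<in>V. N v v dvd x v - y v"
    proof
      fix v assume v: "v \<in> V"
      show "N v v dvd x v - y v"
      proof (cases "N v v = 0")
        case True then show ?thesis using y(2) xZ(2) v by simp
      next
        case False
        have "Fm y v = Fm x v" using y(3) by simp
        then have "y v mod \<bar>N v v\<bar> = x v mod \<bar>N v v\<bar>" unfolding Fm_def using v False by simp
        then show ?thesis using dvd_mod_abs by simp
      qed
    qed
    then have "x - y \<in> img V N" unfolding img_diag using Zs_diff[OF xZ(1) y(1)] by simp
    then show "y \<in> relL V (img V N) `` {x}" unfolding relL_def using xZ(1) y(1) by simp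
  qed
qed

lemma Fm_image: "Fm ` torsL V (img V N) = PiE {v\<in>V. N v v \<noteq> 0} (\<lambda>v. {0..<\<bar>N v v\<bar>})"
proof
  show "Fm ` torsL V (img V N) \<subseteq> PiE {v\<in>V. N v v \<noteq> 0} (\<lambda>v. {0..<\<bar>N v v\<bar>})"
    unfolding Fm_def by (auto simp: PiE_def)
  show "PiE {v\<in>V. N v v \<noteq> 0} (\<lambda>v. {0..<\<bar>N v v\<bar>}) \<subseteq> Fm ` torsL V (img V N)"
  proof
    fix h assume h: "h \<in> PiE {v\<in>V. N v v \<noteq> 0} (\<lambda>v. {0..<\<bar>N v v\<bar>})"
    define x where "x = (\<lambda>v. if v \<in> V \<and> N v v \<noteq> 0 then h v else 0)"
    have "x \<in> torsL V (img V N)" unfolding tors_diag x_def Zs_def by auto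
    moreover have "Fm x = h"
    proof (rule ext)
      fix v
      show "Fm x v = h v"
      proof (cases "v \<in> V \<and> N v v \<noteq> 0")
        case True
        then have "0 \<le> h v" "h v < \<bar>N v v\<bar>" using h by (auto simp: PiE_def Pi_def)
        then show ?thesis using True unfolding Fm_def x_def by simp
      next
        case False
        then show ?thesis using h unfolding Fm_def by (auto simp: PiE_def extensional_def)
      qed
    qed
    ultimately show "h \<in> Fm ` torsL V (img V N)" by (metis image_eqI)
  qed
qed

lemma tcard_diag: "card (torsL V (img V N) // relL V (img V N)) = (\<Prod>v\<in>{v\<in>V. N v v \<noteq> 0}. nat \<bar>N v v\<bar>)"
proof -
  let ?T = "torsL V (img V N)"
  let ?g = "\<lambda>z. {y \<in> ?T. Fm y = z}"
  have q: "?T // relL V (img V N) = ?g ` (Fm ` ?T)"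
    unfolding quotient_def using rel_class_diag by (auto simp: image_image)
  have inj: "inj_on ?g (Fm ` ?T)"
  proof (rule inj_onI)
    fix z1 z2 assume z: "z1 \<in> Fm ` ?T" "z2 \<in> Fm ` ?T" "?g z1 = ?g z2"
    then obtain x1 where x1: "x1 \<in> ?T" "z1 = Fm x1" by blast
    then have "x1 \<in> ?g z1" by simp
    then have "x1 \<in> ?g z2" using z(3) by simp
    then show "z1 = z2" using x1 by simp
  qed
  have "card (?T // relL V (img V N)) = card (Fm ` ?T)" unfolding q by (rule card_image[OF inj])
  also have "\<dots> = (\<Prod>v\<in>{v\<in>V. N v v \<noteq> 0}. card {0..<\<bar>N v v\<bar>})"
    unfolding Fm_image by (rule card_PiE) (use fin in simp)
  finally show ?thesis by simp
qed

lemma rank_diag: "Max (rsetL V (img V N)) = card {v\<in>V. N v v = 0}"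
proof (rule Max_eqI)
  let ?Z = "{v\<in>V. N v v = 0}"
  have fZ: "finite ?Z" using fin by simp
  have le: "n \<le> card ?Z" if "n \<in> rsetL V (img V N)" for n
  proof (rule ccontr)
    assume "\<not> n \<le> card ?Z"
    from that obtain S where S: "n = card S" "finite S" "S \<subseteq> Zs V"
      and ind: "\<And>c. (\<lambda>w. \<Sum>s\<in>S. c s * s w) \<in> img V N \<Longrightarrow> (\<forall>s\<in>S. c s = 0)"
      unfolding rsetL_def by blast
    have "card ?Z < card S" using \<open>\<not> n \<le> card ?Z\<close> S(1) by simp
    from int_dep[OF fZ S(2) this, of "\<lambda>s. s"]
    obtain c where c: "\<exists>s\<in>S. c s \<noteq> 0" "\<forall>w\<in>?Z. (\<Sum>s\<in>S. c s * s w) = 0" by blast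
    have "(\<lambda>w. \<Sum>s\<in>S. (Kd * c s) * s w) \<in> img V N"
      unfolding img_diag
    proof (intro CollectI conjI ballI)
      show "(\<lambda>w. \<Sum>s\<in>S. (Kd * c s) * s w) \<in> Zs V" by (rule Zs_sum[OF S(3)])
      fix v assume v: "v \<in> V"
      have e: "(\<Sum>s\<in>S. (Kd * c s) * s v) = Kd * (\<Sum>s\<in>S. c s * s v)"
        by (simp add: sum_distrib_left mult.assoc)
      show "N v v dvd (\<Sum>s\<in>S. (Kd * c s) * s v)"
      proof (cases "N v v = 0")
        case True then show ?thesis using c(2) v e by simp
      next
        case False then show ?thesis using Kd_dvd[OF v False] e by simp
      qed
    qed
    then have "\<forall>s\<in>S. Kd * c s = 0" using ind[of "\<lambda>s. Kd * c s"] by simp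
    then show False using c(1) Kd_nz by simp
  qed
  show "finite (rsetL V (img V N))"
    by (rule finite_subset[of _ "{..card ?Z}"]) (use le in \<open>auto simp del: mem_Collect_eq\<close>)
  show "\<And>n. n \<in> rsetL V (img V N) \<Longrightarrow> n \<le> card ?Z" using le by blast
  define e where "e = (\<lambda>z::'v. \<lambda>w::'v. if w = z then (1::int) else 0)"
  have inje: "inj_on e ?Z" unfolding e_def inj_on_def by (metis zero_neq_one)
  have m1: "card (e ` ?Z) = card ?Z" by (rule card_image[OF inje])
  have m2: "finite (e ` ?Z)" using fZ by simp
  have m3: "e ` ?Z \<subseteq> Zs V" unfolding e_def Zs_def by auto
  have m4: "\<forall>s\<in>e ` ?Z. c s = 0" if h: "(\<lambda>w. \<Sum>s\<in>e ` ?Z. c s * s w) \<in> img V N" for c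
  proof
    fix s assume "s \<in> e ` ?Z"
    then obtain z where z: "z \<in> ?Z" "s = e z" by blast
    have "(\<Sum>s\<in>e ` ?Z. c s * s z) = (\<Sum>z'\<in>?Z. c (e z') * e z' z)"
      using sum.reindex[OF inje, of "\<lambda>s. c s * s z"] by simp
    also have "\<dots> = (\<Sum>z'\<in>?Z. if z' = z then c (e z) else 0)"
      by (rule sum.cong) (auto simp: e_def)
    also have "\<dots> = c (e z)" using z(1) fZ by simp
    finally have "(\<Sum>s\<in>e ` ?Z. c s * s z) = c (e z)" .
    moreover have "N z z dvd (\<Sum>s\<in>e ` ?Z. c s * s z)" using h z(1) unfolding img_diag by auto
    ultimately show "c s = 0" using z by simp
  qed
  show "card ?Z \<in> rsetL V (img V N)" unfolding rsetL_def mem_Collect_eq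
    by (rule exI[of _ "e ` ?Z"]) (use m1 m2 m3 m4 in simp)
qed

end

lemma pcompose_power: "pcompose (p ^ n) r = (pcompose p r) ^ n"
  by (induction n) (simp_all add: pcompose_1 pcompose_mult)

lemma coeff_xpow_mult: "coeff ([:0, 1:] ^ n * q) n = coeff (q::'a::comm_ring_1 poly) 0"
proof -
  have "[:0, 1:] ^ n = (monom 1 n :: 'a poly)" by (simp add: monom_altdef)
  then show ?thesis by (simp add: coeff_monom_mult)
qed

lemma star_nonzero:
  fixes g :: "int poly"
  assumes "g \<noteq> 0"
  shows "coeff (pcompose g [:1, 1:]) (order 1 g) \<noteq> 0"
proof -
  obtain q where q: "g = [:- 1, 1:] ^ order 1 g * q" "\<not> [:- 1, 1:] dvd q"
    using order_decomp[OF assms] by blast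
  have "pcompose g [:1, 1:] = [:0, 1:] ^ order 1 g * pcompose q [:1, 1:]"
    by (subst q(1)) (simp add: pcompose_mult pcompose_power pcompose_pCons)
  then have "coeff (pcompose g [:1, 1:]) (order 1 g) = coeff (pcompose q [:1, 1:]) 0"
    by (simp add: coeff_xpow_mult)
  also have "\<dots> = poly q 1" by (simp add: poly_0_coeff_0[symmetric] poly_pcompose)
  finally show ?thesis using q(2) poly_eq_0_iff_dvd[of q 1] by simp
qed

lemma poly_det_on: "poly (det_on V M) x = det_on V (\<lambda>v w. poly (M v w) x)"
  unfolding det_on_def by (simp add: poly_sum poly_prod)

lemma pcompose_det_on: "pcompose (det_on V M) r = det_on V (\<lambda>v w. pcompose (M v w) r)"
  unfolding det_on_def by (simp add: pcompose_sum pcompose_prod pcompose_mult of_int_poly pcompose_smult)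

lemma det_on_id:
  assumes "finite V"
  shows "det_on V (\<lambda>v w. if v = w then (1::'a::comm_ring_1) else 0) = 1"
proof -
  have "det_on V (\<lambda>v w. if v = w then (1::'a) else 0) = (\<Sum>p\<in>{p. p permutes V}. if p = id then 1 else 0)"
    unfolding det_on_def
  proof (rule sum.cong[OF refl])
    fix p assume "p \<in> {p. p permutes V}"
    then have p: "p permutes V" by simp
    show "of_int (sign p) * (\<Prod>v\<in>V. if v = p v then (1::'a) else 0) = (if p = id then 1 else 0)"
    proof (cases "p = id")
      case True then show ?thesis by (simp add: sign_id)
    next
      case False
      then obtain v where v: "p v \<noteq> v" by (auto simp: fun_eq_iff)
      then have "v \<in> V" using p unfolding permutes_def by auto
      then have "(\<Prod>v\<in>V. if v = p v then (1::'a) else 0) = 0"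
        using assms v \<open>v \<in> V\<close> by (intro prod_zero) (auto intro!: bexI[of _ v])
      then show ?thesis using False by simp
    qed
  qed
  also have "\<dots> = 1" using permutes_id[of V] finite_permutations[OF assms] by (simp add: sum.delta)
  finally show ?thesis .
qed

lemma term_dvd:
  assumes fin: "finite V" and dg: "diag V N" and p: "p permutes V"
  shows "Kd V N dvd coeff (\<Prod>v\<in>V. pm N C v (p v)) (card {v\<in>V. N v v = 0})"
proof -
  let ?Z = "{v\<in>V. N v v = 0}" and ?P = "{v\<in>V. N v v \<noteq> 0}"
  have pV: "\<And>v. v \<in> V \<Longrightarrow> p v \<in> V" using p by (simp add: permutes_in_image)
  have V: "V = ?Z \<union> ?P" by auto
  have "(\<Prod>v\<in>V. pm N C v (p v)) = (\<Prod>v\<in>?Z. pm N C v (p v)) * (\<Prod>v\<in>?P. pm N C v (p v))"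
    by (subst V, rule prod.union_disjoint) (use fin in auto)
  also have "(\<Prod>v\<in>?Z. pm N C v (p v)) = (\<Prod>v\<in>?Z. [:0, 1:] * [:C v (p v):])"
  proof (rule prod.cong[OF refl])
    fix v assume v: "v \<in> ?Z"
    have "N v (p v) = 0"
    proof (cases "p v = v")
      case True then show ?thesis using v by simp
    next
      case False then show ?thesis using dg v pV[of v] unfolding diag_def by auto
    qed
    then show "pm N C v (p v) = [:0, 1:] * [:C v (p v):]" unfolding pm_def by simp
  qed
  also have "\<dots> = [:0, 1:] ^ card ?Z * (\<Prod>v\<in>?Z. [:C v (p v):])"
    by (simp only: prod.distrib prod_constant)
  finally have e: "(\<Prod>v\<in>V. pm N C v (p v)) = [:0, 1:] ^ card ?Z * ((\<Prod>v\<in>?Z. [:C v (p v):]) * (\<Prod>v\<in>?P. pm N C v (p v)))"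
    by (simp add: mult.assoc)
  have c0: "coeff (\<Prod>v\<in>V. pm N C v (p v)) (card ?Z) = (\<Prod>v\<in>?Z. C v (p v)) * (\<Prod>v\<in>?P. N v (p v))"
    unfolding e coeff_xpow_mult poly_0_coeff_0[symmetric] by (simp add: poly_prod pm_def)
  have "Kd V N dvd (\<Prod>v\<in>?P. N v (p v))"
  proof (cases "\<forall>v\<in>?P. p v = v")
    case True
    then have "(\<Prod>v\<in>?P. N v (p v)) = Kd V N" unfolding Kd_def[OF fin dg] by (intro prod.cong) auto
    then show ?thesis by simp
  next
    case False
    then obtain v where v: "v \<in> ?P" "p v \<noteq> v" by blast
    then have "N v (p v) = 0" using dg pV[of v] unfolding diag_def by auto
    then have "(\<Prod>v\<in>?P. N v (p v)) = 0" using v fin by (intro prod_zero) (auto intro!: bexI[of _ v])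
    then show ?thesis by simp
  qed
  then show ?thesis unfolding c0 by simp
qed

lemma coeff_diag_dvd:
  assumes fin: "finite V" and dg: "diag V N"
  shows "Kd V N dvd coeff (det_on V (pm N C)) (card {v\<in>V. N v v = 0})"
  unfolding det_on_def coeff_sum
proof (rule dvd_sum)
  fix p assume "p \<in> {p. p permutes V}"
  then have p: "p permutes V" by simp
  have "coeff (of_int (sign p) * (\<Prod>v\<in>V. pm N C v (p v))) (card {v\<in>V. N v v = 0})
      = of_int (sign p) * coeff (\<Prod>v\<in>V. pm N C v (p v)) (card {v\<in>V. N v v = 0})"
    by (simp add: of_int_poly)
  then show "Kd V N dvd coeff (of_int (sign p) * (\<Prod>v\<in>V. pm N C v (p v))) (card {v\<in>V. N v v = 0})"
    using term_dvd[OF fin dg p, of C] by simp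
qed

lemma bf_op_opm:
  assumes fin: "finite (verts G)"
  shows "bf_op G = opm (verts G) (\<lambda>v w. (if v = w then 1 else 0) - adj G v w)"
proof (intro ext)
  fix f w
  show "bf_op G f w = opm (verts G) (\<lambda>v w. (if v = w then 1 else 0) - adj G v w) f w"
  proof (cases "w \<in> verts G")
    case True
    have "(\<Sum>v\<in>verts G. f v * ((if v = w then 1 else 0) - adj G v w))
        = (\<Sum>v\<in>verts G. (if v = w then f w else 0) - f v * adj G v w)"
      by (rule sum.cong) (auto simp: right_diff_distrib)
    also have "\<dots> = (\<Sum>v\<in>verts G. (if v = w then f w else 0)) - (\<Sum>v\<in>verts G. f v * adj G v w)"
      by (rule sum_subtractf)
    also have "\<dots> = f w - (\<Sum>v\<in>verts G. f v * adj G v w)" using True fin by simp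
    finally show ?thesis unfolding bf_op_def opm_def using True by simp
  next
    case False then show ?thesis unfolding bf_op_def opm_def by simp
  qed
qed

lemma ZV_Zs: "ZV G = Zs (verts G)"
  unfolding ZV_def Zs_def by simp

lemma gX_pcompose:
  assumes fin: "finite (verts G)"
  shows "pcompose (gX G) [:1, 1:] = det_on (verts G) (pm (\<lambda>v w. (if v = w then 1 else 0) - adj G v w) (\<lambda>v w. - adj G v w))"
  unfolding gX_def pcompose_det_on pm_def
  by (rule arg_cong[where f="det_on (verts G)"]) (auto simp: fun_eq_iff pcompose_diff pcompose_pCons pcompose_1 one_pCons)

lemma gX_nonzero:
  assumes fin: "finite (verts G)"
  shows "gX G \<noteq> 0"
proof -
  have "poly (gX G) 0 = det_on (verts G) (\<lambda>v w. if v = w then (1::int) else 0)"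
    unfolding gX_def poly_det_on by (rule arg_cong[where f="det_on (verts G)"]) (auto simp: fun_eq_iff)
  also have "\<dots> = 1" by (rule det_on_id[OF fin])
  finally show ?thesis by auto
qed

theorem theorem2p6:
  fixes G :: "('v,'e) pre_digraph"
  assumes "fin_digraph G"
    and "strongly_connected G"
    and "delta G = 0"
  shows "\<exists>m::int. m \<noteq> 0 \<and> gX_star G = m * int (bf_tors_card G)"
proof -
  define V where "V = verts G"
  have fin: "finite V" unfolding V_def using assms(1) fin_digraph.finite_verts by blast
  define N0 where "N0 = (\<lambda>v w. (if v = w then 1 else 0) - adj G v w)"
  define C0 where "C0 = (\<lambda>v w. - adj G v w)"
  have img0: "bf_image G = img V N0"
    unfolding bf_image_def img_def bf_op_opm[OF fin[unfolded V_def]] ZV_Zs N0_def V_def ..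
  have tc0: "bf_tors_card G = card (torsL V (img V N0) // relL V (img V N0))"
    unfolding bf_tors_card_def bf_tors_reps_def bf_rel_def torsL_def relL_def ZV_Zs img0 V_def ..
  have rk0: "bf_rank G = Max (rsetL V (img V N0))"
    unfolding bf_rank_def rsetL_def ZV_Zs img0 V_def ..
  obtain N' C' where r: "reach V (N0, C0) (N', C')" and dg: "diag V N'"
    using diag_exists[OF fin] by blast
  have iv: "invr V (N0, C0) (N', C')" by (rule reach_invr[OF fin r])
  let ?Z = "{v\<in>V. N' v v = 0}"
  have tc: "bf_tors_card G = (\<Prod>v\<in>{v\<in>V. N' v v \<noteq> 0}. nat \<bar>N' v v\<bar>)"
    using iv tcard_diag[OF fin dg] unfolding tc0 invr_def by simp
  have rk: "bf_rank G = card ?Z"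
    using iv rank_diag[OF fin dg] unfolding rk0 invr_def by simp
  have rX: "rX G = card ?Z" using assms(3) rk unfolding delta_def by simp
  have gp: "pcompose (gX G) [:1, 1:] = det_on V (pm N0 C0)"
    unfolding V_def N0_def C0_def by (rule gX_pcompose[OF fin[unfolded V_def]])
  have dets: "det_on V (pm N' C') = det_on V (pm N0 C0) \<or> det_on V (pm N' C') = - det_on V (pm N0 C0)"
    using iv unfolding invr_def by simp
  have "Kd V N' dvd coeff (det_on V (pm N' C')) (card ?Z)" by (rule coeff_diag_dvd[OF fin dg])
  then have kd: "Kd V N' dvd gX_star G"
    unfolding gX_star_def rX gp using dets by (auto simp: coeff_minus)
  then obtain m0 where m0: "gX_star G = Kd V N' * m0" by blast
  have tcK: "int (bf_tors_card G) = \<bar>Kd V N'\<bar>"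
    unfolding tc Kd_def[OF fin dg] by (simp add: of_nat_prod abs_prod)
  have nz: "gX_star G \<noteq> 0"
    unfolding gX_star_def rX_def by (rule star_nonzero[OF gX_nonzero]) (use fin V_def in simp)
  show ?thesis
  proof (intro exI conjI)
    show "gX_star G = (sgn (Kd V N') * m0) * int (bf_tors_card G)"
      unfolding tcK m0 using sgn_mult_abs[of "Kd V N'"] by (metis mult.assoc mult.commute)
    show "sgn (Kd V N') * m0 \<noteq> 0" using nz m0 by (auto simp: sgn_0_0)
  qed
qed

end
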